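(* For all $r,s\ge1$, as an identity of polynomials in $q$, $$\sum_C(q-1)^{r+s-l(C)-1}=\sum_{m=0}^{\min(r-1,s-1)}\binom{r-1}{m}\binom{s-1}{m}q^{r+s-m-1},$$ where the sum runs over all cells $C$ for $(r,s)$, including the empty cell.
   Context: A cell (for given $r,s$) is a finite (possibly empty) sequence of distinct pairs $(i_1,j_1),\dots,(i_l,j_l)$ with $1\le i_k\le r$, $1\le j_k\le s$, $i_1\le\cdots\le i_l$ and $j_1\le\cdots\le j_l$; $l(C)=l$ is its length. *)

theory Defs
  imports "HOL-Computational_Algebra.Polynomial"
begin

definition is_cell :: "nat \<Rightarrow> nat \<Rightarrow> (nat \<times> nat) list \<Rightarrow> bool" where
  "is_cell r s C \<longleftrightarrow> distinct C \<and> set C \<subseteq> {1..r} \<times> {1..s}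
     \<and> sorted (map fst C) \<and> sorted (map snd C)"

definition cells :: "nat \<Rightarrow> nat \<Rightarrow> (nat \<times> nat) list set" where
  "cells r s = {C. is_cell r s C}"

end

theory Submission
  imports Defs
begin

lemma sorted_wrt_cmp:
  "sorted_wrt P xs \<Longrightarrow> x \<in> set xs \<Longrightarrow> y \<in> set xs \<Longrightarrow> x = y \<or> P x y \<or> P y x"
  by (induction xs) auto

lemma sorted_wrt_distinct_strict:
  "sorted_wrt P xs \<Longrightarrow> distinct xs \<Longrightarrow> sorted_wrt (\<lambda>x y. P x y \<and> x \<noteq> y) xs"
  by (induction xs) auto

lemma sorted_wrt_less_distinct: "sorted_wrt (<) (xs::nat list) \<Longrightarrow> distinct xs"
  by (induction xs) auto

lemma cell_sorted_wrt:
  assumes "is_cell r s C"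
  shows "sorted_wrt (\<lambda>x y. fst x \<le> fst y \<and> snd x \<le> snd y) C"
proof -
  have "sorted_wrt (\<lambda>x y. fst x \<le> fst y) C" "sorted_wrt (\<lambda>x y. snd x \<le> snd y) C"
    using assms by (auto simp: is_cell_def sorted_map)
  then show ?thesis by (induction C) auto
qed

lemma cell_cmp:
  assumes "is_cell r s C" "x \<in> set C" "y \<in> set C"
  shows "(fst x \<le> fst y \<and> snd x \<le> snd y) \<or> (fst y \<le> fst x \<and> snd y \<le> snd x)"
  using sorted_wrt_cmp[OF cell_sorted_wrt[OF assms(1)] assms(2,3)] by auto

lemma cell_length:
  assumes "C \<in> cells r s"
  shows "length C \<le> r + s - 1"
proof -
  have c: "is_cell r s C" using assms by (simp add: cells_def)
  let ?f = "\<lambda>x::nat\<times>nat. fst x + snd x"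
  have "sorted_wrt (\<lambda>x y. (fst x \<le> fst y \<and> snd x \<le> snd y) \<and> x \<noteq> y) C"
    using sorted_wrt_distinct_strict[OF cell_sorted_wrt[OF c]] c by (simp add: is_cell_def)
  then have "sorted_wrt (\<lambda>x y. ?f x < ?f y) C"
    by (rule sorted_wrt_mono_rel[rotated]) (auto simp: prod_eq_iff)
  then have "sorted_wrt (<) (map ?f C)" by (simp add: sorted_wrt_map)
  then have d: "distinct (map ?f C)" by (rule sorted_wrt_less_distinct)
  have "set (map ?f C) \<subseteq> {2..r+s}" using c by (auto simp: is_cell_def)
  then have "card (set (map ?f C)) \<le> card {2..r+s}" by (intro card_mono) auto
  then show ?thesis using distinct_card[OF d] by simp
qed

lemma finite_cells: "finite (cells r s)"
proof -
  have "cells r s \<subseteq> {xs. set xs \<subseteq> {1..r}\<times>{1..s} \<and> length xs \<le> r + s}"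
    using cell_length by (auto simp: cells_def) (auto simp: is_cell_def, fastforce)
  then show ?thesis by (rule finite_subset) (intro finite_lists_length_le, simp)
qed

lemma cells_0 [simp]: "cells 0 s = {[]}" "cells r 0 = {[]}"
  by (auto simp: cells_def is_cell_def)

lemma is_cell_mono: "is_cell r s C \<Longrightarrow> r \<le> r' \<Longrightarrow> s \<le> s' \<Longrightarrow> is_cell r' s' C"
  by (auto simp: is_cell_def)

lemma cells_inter: "cells (r-1) s \<inter> cells r (s-1) = cells (r-1) (s-1)"
  by (auto simp: cells_def is_cell_def subset_iff) (meson diff_le_self le_trans)+

lemma cells_decomp:
  assumes "r \<ge> 1" "s \<ge> 1"
  defines "T \<equiv> cells (r-1) s \<union> cells r (s-1)"
  shows "cells r s = T \<union> (\<lambda>C. C @ [(r,s)]) ` T"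
    and "T \<inter> (\<lambda>C. C @ [(r,s)]) ` T = {}"
    and "\<forall>C\<in>T. (r,s) \<notin> set C"
proof -
  show nT: "\<forall>C\<in>T. (r,s) \<notin> set C"
    using assms by (auto simp: T_def cells_def is_cell_def)
  have T_cell: "is_cell r s C" if "C \<in> T" for C
    using that by (auto simp: T_def cells_def intro: is_cell_mono)
  have app: "is_cell r s (C @ [(r,s)])" if "C \<in> T" for C
  proof -
    have c: "is_cell r s C" by (rule T_cell[OF that])
    have "(r,s) \<notin> set C" using nT that by blast
    then show ?thesis using c assms by (auto simp: is_cell_def sorted_append)
  qed
  have avoid: "C \<in> T" if c: "is_cell r s C" and n: "(r,s) \<notin> set C" for C
  proof (cases "\<exists>j. (r,j) \<in> set C")
    case False
    have "\<forall>(a,b)\<in>set C. a \<le> r - 1"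
    proof (intro ballI, clarify)
      fix a b assume "(a,b) \<in> set C"
      then have "a \<le> r" "a \<noteq> r" using c False by (auto simp: is_cell_def)
      then show "a \<le> r - 1" by linarith
    qed
    then have "is_cell (r-1) s C" using c unfolding is_cell_def by fastforce
    then show ?thesis by (simp add: T_def cells_def)
  next
    case True
    then obtain j where j: "(r,j) \<in> set C" by blast
    have "\<not> (\<exists>i. (i,s) \<in> set C)"
    proof
      assume "\<exists>i. (i,s) \<in> set C"
      then obtain i where i: "(i,s) \<in> set C" by blast
      have "i \<le> r" "j \<le> s" using c i j by (auto simp: is_cell_def)
      then show False using cell_cmp[OF c j i] n i j by auto
    qed
    then have "\<forall>(a,b)\<in>set C. b \<le> s - 1"
    proof (intro ballI, clarify)
      fix a b assume "(a,b) \<in> set C" "\<not> (\<exists>i. (i,s) \<in> set C)"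
      then have "b \<le> s" "b \<noteq> s" using c by (auto simp: is_cell_def)
      then show "b \<le> s - 1" by linarith
    qed
    then have "is_cell r (s-1) C" using c unfolding is_cell_def by fastforce
    then show ?thesis by (simp add: T_def cells_def)
  qed
  show "cells r s = T \<union> (\<lambda>C. C @ [(r,s)]) ` T"
  proof
    show "T \<union> (\<lambda>C. C @ [(r, s)]) ` T \<subseteq> cells r s"
      using T_cell app by (auto simp: cells_def)
  next
    show "cells r s \<subseteq> T \<union> (\<lambda>C. C @ [(r, s)]) ` T"
    proof
      fix C assume "C \<in> cells r s"
      then have c: "is_cell r s C" by (simp add: cells_def)
      show "C \<in> T \<union> (\<lambda>C. C @ [(r, s)]) ` T"
      proof (cases "(r,s) \<in> set C")
        case False then show ?thesis using avoid c by blast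
      next
        case True
        then obtain xs ys where C: "C = xs @ (r,s) # ys" by (meson split_list)
        have "ys = []"
        proof (rule ccontr)
          assume "ys \<noteq> []"
          then obtain y where y: "y \<in> set ys" by (cases ys) auto
          have "r \<le> fst y" "s \<le> snd y" "fst y \<le> r" "snd y \<le> s"
            using c y unfolding C is_cell_def by (auto simp: sorted_append)
          then have "y = (r,s)" by (simp add: prod_eq_iff)
          then show False using c y unfolding C is_cell_def by auto
        qed
        then have C': "C = xs @ [(r,s)]" using C by simp
        have "is_cell r s xs" "(r,s) \<notin> set xs"
          using c unfolding C' is_cell_def by (auto simp: sorted_append)
        then have "xs \<in> T" by (rule avoid)
        then show ?thesis using C' by blast
      qed
    qed
  qed
  show "T \<inter> (\<lambda>C. C @ [(r,s)]) ` T = {}" using nT by auto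
qed

lemma sum_cells_decomp:
  fixes f :: "(nat \<times> nat) list \<Rightarrow> 'a::ab_group_add"
  assumes "r \<ge> 1" "s \<ge> 1"
  shows "(\<Sum>C\<in>cells r s. f C) =
     (\<Sum>C\<in>cells (r-1) s. f C + f (C @ [(r,s)])) + (\<Sum>C\<in>cells r (s-1). f C + f (C @ [(r,s)]))
     - (\<Sum>C\<in>cells (r-1) (s-1). f C + f (C @ [(r,s)]))"
proof -
  define T where "T = cells (r-1) s \<union> cells r (s-1)"
  have fT: "finite T" by (simp add: T_def finite_cells)
  have "(\<Sum>C\<in>cells r s. f C) = (\<Sum>C\<in>T. f C) + (\<Sum>C\<in>(\<lambda>C. C @ [(r,s)]) ` T. f C)"
    using cells_decomp[OF assms] fT by (simp add: T_def sum.union_disjoint)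
  also have "(\<Sum>C\<in>(\<lambda>C. C @ [(r,s)]) ` T. f C) = (\<Sum>C\<in>T. f (C @ [(r,s)]))"
    by (subst sum.reindex) (auto simp: inj_on_def)
  also have "(\<Sum>C\<in>T. f C) + (\<Sum>C\<in>T. f (C @ [(r,s)])) = (\<Sum>C\<in>T. f C + f (C @ [(r,s)]))"
    by (simp add: sum.distrib)
  also have "\<dots> = (\<Sum>C\<in>cells (r-1) s. f C + f (C @ [(r,s)])) + (\<Sum>C\<in>cells r (s-1). f C + f (C @ [(r,s)]))
     - (\<Sum>C\<in>cells (r-1) (s-1). f C + f (C @ [(r,s)]))"
    unfolding T_def using sum.union_inter[OF finite_cells finite_cells, of "\<lambda>C. f C + f (C @ [(r,s)])" "r-1" s r "s-1"]
    unfolding cells_inter by (simp add: algebra_simps)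
  finally show ?thesis .
qed

definition gg :: "nat \<Rightarrow> nat \<Rightarrow> int poly" where
  "gg r s = (\<Sum>C\<in>cells r s. [:-1, 1:] ^ (r + s - length C - 1))"

lemma q_eq: "[:-1,1:] + 1 = ([:0,1:] :: int poly)" by (simp add: one_pCons)

lemma pstep: "[:-1,1:]^(Suc k) + [:-1,1:]^k = ([:0,1:]::int poly) * [:-1,1:]^k"
proof -
  have "([:-1,1:]::int poly)^(Suc k) + [:-1,1:]^k = ([:-1,1:] + 1) * [:-1,1:]^k"
    by (simp add: algebra_simps)
  then show ?thesis by (simp only: q_eq)
qed

lemma gg_0 [simp]: "gg 0 s = [:-1,1:]^(s-1)" "gg r 0 = [:-1,1:]^(r-1)"
  by (simp_all add: gg_def)

lemma gg_rec_gen: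
  assumes "r \<ge> 1" "s \<ge> 1"
  shows "gg r s = [:0,1:] * gg (r-1) s + [:0,1:] * gg r (s-1)
     - (\<Sum>C\<in>cells (r-1) (s-1). [:-1, 1:] ^ (r + s - length C - 1) + [:-1, 1:] ^ (r + s - length C - 2))"
proof -
  let ?t = "[:-1, 1:] :: int poly"
  let ?h = "\<lambda>C. ?t ^ (r + s - length C - 1) + ?t ^ (r + s - length (C @ [(r,s)]) - 1)"
  have 1: "(\<Sum>C\<in>cells (r-1) s. ?h C) = [:0,1:] * gg (r-1) s"
    unfolding gg_def sum_distrib_left
  proof (rule sum.cong[OF refl])
    fix C assume "C \<in> cells (r-1) s"
    then have L: "length C \<le> (r-1)+s-1" by (rule cell_length)
    have e1: "r+s-length C - 1 = Suc ((r-1)+s-length C-1)" using L assms by arith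
    have e2: "r+s-length(C@[(r,s)])-1 = (r-1)+s-length C - 1" using assms by simp
    show "?h C = [:0,1:] * ?t ^ ((r-1)+s-length C-1)" unfolding e1 e2 by (rule pstep)
  qed
  have 2: "(\<Sum>C\<in>cells r (s-1). ?h C) = [:0,1:] * gg r (s-1)"
    unfolding gg_def sum_distrib_left
  proof (rule sum.cong[OF refl])
    fix C assume "C \<in> cells r (s-1)"
    then have L: "length C \<le> r+(s-1)-1" by (rule cell_length)
    have e1: "r+s-length C - 1 = Suc (r+(s-1)-length C-1)" using L assms by arith
    have e2: "r+s-length(C@[(r,s)])-1 = r+(s-1)-length C - 1" using assms by simp
    show "?h C = [:0,1:] * ?t ^ (r+(s-1)-length C-1)" unfolding e1 e2 by (rule pstep)
  qed
  have 3: "?h C = ?t ^ (r + s - length C - 1) + ?t ^ (r + s - length C - 2)" for C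
    by (simp add: numeral_2_eq_2)
  have "gg r s = (\<Sum>C\<in>cells (r-1) s. ?h C) + (\<Sum>C\<in>cells r (s-1). ?h C) - (\<Sum>C\<in>cells (r-1) (s-1). ?h C)"
    unfolding gg_def by (rule sum_cells_decomp[OF assms])
  also have "(\<Sum>C\<in>cells (r-1) (s-1). ?h C) = (\<Sum>C\<in>cells (r-1) (s-1). ?t ^ (r + s - length C - 1) + ?t ^ (r + s - length C - 2))"
    by (simp only: 3)
  finally show ?thesis by (simp only: 1 2)
qed

lemma gg_rec:
  assumes "r \<ge> 1" "s \<ge> 1" "r + s \<ge> 3"
  shows "gg r s = [:0,1:] * (gg (r-1) s + gg r (s-1) - [:-1,1:] * gg (r-1) (s-1))"
proof -
  let ?t = "[:-1, 1:] :: int poly"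
  have "(\<Sum>C\<in>cells (r-1) (s-1). ?t ^ (r + s - length C - 1) + ?t ^ (r + s - length C - 2))
     = [:0,1:] * ?t * gg (r-1) (s-1)"
    unfolding gg_def sum_distrib_left
  proof (rule sum.cong[OF refl])
    fix C assume "C \<in> cells (r-1) (s-1)"
    then have L: "length C \<le> (r-1)+(s-1)-1" by (rule cell_length)
    have e1: "r+s-length C - 1 = Suc (Suc ((r-1)+(s-1)-length C-1))" using L assms by arith
    have e2: "r+s-length C - 2 = Suc ((r-1)+(s-1)-length C-1)" using L assms by arith
    show "?t ^ (r + s - length C - 1) + ?t ^ (r + s - length C - 2) =
       [:0,1:] * ?t * ?t ^ ((r-1)+(s-1)-length C-1)" unfolding e1 e2 pstep by simp
  qed
  then show ?thesis using gg_rec_gen[OF assms(1,2)] by (simp add: algebra_simps)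
qed

lemma gg_11: "gg 1 1 = [:0,1:]"
  using gg_rec_gen[of 1 1] by (simp add: q_eq[symmetric])

definition tm :: "nat \<Rightarrow> nat \<Rightarrow> nat \<Rightarrow> int poly" where
  "tm a b m = of_nat (a choose m) * of_nat (b choose m) * [:0,1:]^(a+b+1-m)"

definition RR :: "nat \<Rightarrow> nat \<Rightarrow> nat \<Rightarrow> int poly" where
  "RR a b N = (\<Sum>m\<le>N. tm a b m)"

lemma RR_min: "min a b \<le> N \<Longrightarrow> RR a b N = RR a b (min a b)"
  unfolding RR_def by (rule sum.mono_neutral_right) (auto simp: tm_def min_def split: if_splits)

lemma tm_step:
  "tm (Suc a) (Suc b) (Suc m) = [:0,1:] * tm a (Suc b) (Suc m) + [:0,1:] * tm (Suc a) b (Suc m)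
     - [:0,1:] * [:0,1:] * tm a b (Suc m) + [:0,1:] * tm a b m"
proof (cases "m \<le> a")
  case True
  define d where "d = a + b - m"
  define q where "q = ([:0,1:] :: int poly)"
  have e1: "Suc a + Suc b + 1 - Suc m = Suc (Suc d)" "a + Suc b + 1 - Suc m = Suc d"
    "Suc a + b + 1 - Suc m = Suc d" "a + b + 1 - Suc m = d" "a + b + 1 - m = Suc d"
    using True by (simp_all add: d_def)
  show ?thesis
    unfolding tm_def e1 binomial_Suc_Suc q_def[symmetric]
    by (simp add: algebra_simps)
next
  case False
  then have "a choose m = 0" "a choose Suc m = 0" "Suc a choose Suc m = 0"
    by (simp_all add: binomial_eq_0)
  then show ?thesis by (simp only: tm_def) simp
qed

lemma tm_0: "tm a b 0 = [:0,1:]^(a+b+1)" by (simp add: tm_def)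

lemma RR_rec:
  "RR (Suc a) (Suc b) (Suc N) = [:0,1:] * RR a (Suc b) (Suc N) + [:0,1:] * RR (Suc a) b (Suc N)
     - [:0,1:] * [:0,1:] * RR a b (Suc N) + [:0,1:] * RR a b N"
proof -
  define q where "q = ([:0,1:] :: int poly)"
  have "(\<Sum>m\<le>N. tm (Suc a) (Suc b) (Suc m)) = (\<Sum>m\<le>N. q * tm a (Suc b) (Suc m) + q * tm (Suc a) b (Suc m)
     - q * q * tm a b (Suc m) + q * tm a b m)"
    unfolding q_def by (rule sum.cong[OF refl]) (rule tm_step)
  also have "\<dots> = q * (\<Sum>m\<le>N. tm a (Suc b) (Suc m)) + q * (\<Sum>m\<le>N. tm (Suc a) b (Suc m))
     - q * q * (\<Sum>m\<le>N. tm a b (Suc m)) + q * (\<Sum>m\<le>N. tm a b m)"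
    by (simp add: sum.distrib sum_subtractf sum_distrib_left)
  finally have X: "(\<Sum>m\<le>N. tm (Suc a) (Suc b) (Suc m)) = q * (\<Sum>m\<le>N. tm a (Suc b) (Suc m)) + q * (\<Sum>m\<le>N. tm (Suc a) b (Suc m))
     - q * q * (\<Sum>m\<le>N. tm a b (Suc m)) + q * (\<Sum>m\<le>N. tm a b m)" .
  show ?thesis
    unfolding RR_def sum.atMost_Suc_shift tm_0 q_def[symmetric] X
    by (simp add: algebra_simps)
qed

definition Rf :: "nat \<Rightarrow> nat \<Rightarrow> int poly" where "Rf a b = RR a b (min a b)"

lemma Rf_0: "Rf 0 b = [:0,1:]^(Suc b)" "Rf a 0 = [:0,1:]^(Suc a)"
  by (simp_all add: Rf_def RR_def tm_0)

lemma Rf_rec: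
  "Rf (Suc a) (Suc b) = [:0,1:] * Rf a (Suc b) + [:0,1:] * Rf (Suc a) b
     - [:0,1:] * [:0,1:] * Rf a b + [:0,1:] * Rf a b"
proof -
  define N where "N = a + b + 1"
  have "RR (Suc a) (Suc b) (Suc N) = Rf (Suc a) (Suc b)" "RR a (Suc b) (Suc N) = Rf a (Suc b)"
    "RR (Suc a) b (Suc N) = Rf (Suc a) b" "RR a b (Suc N) = Rf a b" "RR a b N = Rf a b"
    unfolding Rf_def by (rule RR_min; simp add: N_def)+
  then show ?thesis using RR_rec[of a b N] by simp
qed

lemma t_eq: "([:-1,1:] :: int poly) = [:0,1:] - 1"
  using q_eq by (simp add: algebra_simps)

lemma main_ind: "gg (Suc a) (Suc b) = Rf a b"
proof (induction a arbitrary: b)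
  case 0
  show ?case
  proof (induction b)
    case 0 then show ?case using gg_11 by (simp add: Rf_0)
  next
    case (Suc b)
    have "gg 1 (Suc (Suc b)) = [:0,1:] * (gg 0 (Suc (Suc b)) + gg 1 (Suc b) - [:-1,1:] * gg 0 (Suc b))"
      using gg_rec[of 1 "Suc (Suc b)"] by simp
    then show ?case using Suc by (simp add: Rf_0)
  qed
next
  case (Suc a)
  note outer = Suc.IH
  show ?case
  proof (induction b)
    case 0
    have "gg (Suc (Suc a)) 1 = [:0,1:] * (gg (Suc a) 1 + gg (Suc (Suc a)) 0 - [:-1,1:] * gg (Suc a) 0)"
      using gg_rec[of "Suc (Suc a)" 1] by simp
    then show ?case using outer[of 0] by (simp add: Rf_0)
  next
    case (Suc b)
    have "gg (Suc (Suc a)) (Suc (Suc b)) = [:0,1:] * (gg (Suc a) (Suc (Suc b)) + gg (Suc (Suc a)) (Suc b)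
        - [:-1,1:] * gg (Suc a) (Suc b))"
      using gg_rec[of "Suc (Suc a)" "Suc (Suc b)"] by simp
    also have "\<dots> = [:0,1:] * (Rf a (Suc b) + Rf (Suc a) b - [:-1,1:] * Rf a b)"
      using outer[of "Suc b"] outer[of b] Suc.IH by simp
    also have "\<dots> = Rf (Suc a) (Suc b)"
      unfolding Rf_rec t_eq by (simp add: algebra_simps)
    finally show ?case .
  qed
qed

theorem mainTheorem15:
  fixes r s :: nat
  assumes "r \<ge> 1" and "s \<ge> 1"
  shows "(\<Sum>C\<in>cells r s. ([:-1, 1:] :: int poly) ^ (r + s - length C - 1))
       = (\<Sum>m = 0..min (r - 1) (s - 1).
            of_nat ((r - 1) choose m) * of_nat ((s - 1) choose m) * [:0, 1:] ^ (r + s - m - 1))"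
proof -
  obtain a b where r: "r = Suc a" and s: "s = Suc b"
    using assms by (metis Suc_pred' less_eq_Suc_le One_nat_def)
  have "(\<Sum>C\<in>cells r s. ([:-1, 1:] :: int poly) ^ (r + s - length C - 1)) = gg r s"
    by (simp add: gg_def)
  also have "\<dots> = Rf a b" using main_ind r s by simp
  also have "\<dots> = (\<Sum>m = 0..min (r - 1) (s - 1).
            of_nat ((r - 1) choose m) * of_nat ((s - 1) choose m) * [:0, 1:] ^ (r + s - m - 1))"
    unfolding Rf_def RR_def tm_def r s atLeast0AtMost by simp
  finally show ?thesis .
qed

end
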